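(* Let $\beta\in\mathcal{A}$ and let $f=\sum_{\alpha\in\mathcal{A}}c_\alpha\mathrm{e}^\alpha\in C_X(\mathcal{A},\beta)$ with $c_\beta<0$. Suppose $\nu\in\mathbb{R}^{\mathcal{A}}$ satisfies the relative entropy condition $\mathbf{1}^T\nu=0$, $\nu\ne0$ and $\sigma_X(-\mathcal{A}\nu)+D(\nu_{\setminus\beta},e\,c_{\setminus\beta})\le c_\beta$. If $\nu=\sum_{i=1}^k\theta_i\nu^{(i)}$ is a convex combination (with $\theta_i>0$, $\sum\theta_i=1$) of pairwise non-proportional vectors $\nu^{(i)}\in N_\beta$ ($k\ge2$) and the map $\tilde\nu\mapsto\sigma_X(-\mathcal{A}\tilde\nu)$ is affine on $\operatorname{conv}\{\nu^{(1)},\dots,\nu^{(k)}\}$, then $f$ does not generate an extreme ray of $C_X(\mathcal{A},\beta)$.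
   Context: $X\subset\mathbb{R}^n$ is a nonempty closed convex set and $\mathcal{A}\subset\mathbb{R}^n$ is a nonempty finite set such that the functions $x\mapsto\exp(\alpha^Tx)$, $\alpha\in\mathcal{A}$, are linearly independent on $X$. $\mathbb{R}^{\mathcal{A}}$ denotes real vectors indexed by $\mathcal{A}$; for $c\in\mathbb{R}^{\mathcal{A}}$, $c_{\setminus\beta}\in\mathbb{R}^{\mathcal{A}\setminus\{\beta\}}$ deletes the $\beta$-entry. $\mathcal{A}$ is viewed as the linear map $\mathbb{R}^{\mathcal{A}}\to\mathbb{R}^n$, $\mathcal{A}\nu=\sum_{\alpha}\alpha\nu_\alpha$. $\sigma_X(y)=\sup\{y^Tx:x\in X\}$. $N_\beta=\{\nu\in\mathbb{R}^{\mathcal{A}}:\nu_\alpha\ge0\ \forall\alpha\neq\beta,\ \sum_\alpha\nu_\alpha=0\}$. A signomial supported on $\mathcal{A}$ is $f=\sum_{\alpha\in\mathcal{A}}c_\alpha\mathrm{e}^\alpha$ with $\mathrm{e}^\alpha(x)=\exp(\alpha^Tx)$, identified with its coefficient vector $c$. For $\beta\in\mathcal{A}$, the $X$-AGE cone $C_X(\mathcal{A},\beta)$ is the set of signomials supported on $\mathcal{A}$ that are nonnegative on $X$ and satisfy $c_\alpha\ge0$ for all $\alpha\neq\beta$. The relative entropy is $D(\nu,c)=\sum_\alpha\nu_\alpha\log(\nu_\alpha/c_\alpha)$, continuously extended to nonnegative arguments (with $0\log(0/c)=0$, $\nu\log(\nu/0)=+\infty$ for $\nu>0$), and $D(\nu,c)=+\infty$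 if $\nu$ or $c$ has a negative entry; $e$ is Euler's number. (It is known that $f\in C_X(\mathcal{A},\beta)$ iff some nonzero $\nu$ satisfies the relative entropy condition above.) *)

theory Defs
  imports "HOL-Analysis.Analysis"
begin

text \<open>Vectors in R^A, for a finite set A of exponent vectors in R^n, are represented as
  functions on the ambient space R^n that vanish outside A.\<close>
definition rvec :: "('a::real_vector) set \<Rightarrow> ('a \<Rightarrow> real) set" where
  "rvec A = {v. \<forall>x. x \<notin> A \<longrightarrow> v x = 0}"

definition Amap :: "('a::real_vector) set \<Rightarrow> ('a \<Rightarrow> real) \<Rightarrow> 'a" where
  "Amap A \<nu> = (\<Sum>\<alpha>\<in>A. \<nu> \<alpha> *\<^sub>R \<alpha>)"

definition supp_fun :: "('a::real_inner) set \<Rightarrow> 'a \<Rightarrow> ereal" where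
  "supp_fun X y = (SUP x\<in>X. ereal (y \<bullet> x))"

definition signomial :: "('a::real_inner) set \<Rightarrow> ('a \<Rightarrow> real) \<Rightarrow> 'a \<Rightarrow> real" where
  "signomial A c x = (\<Sum>\<alpha>\<in>A. c \<alpha> * exp (\<alpha> \<bullet> x))"

definition exp_lin_indep :: "('a::real_inner) set \<Rightarrow> 'a set \<Rightarrow> bool" where
  "exp_lin_indep X A \<longleftrightarrow>
     (\<forall>c. (\<forall>x\<in>X. signomial A c x = 0) \<longrightarrow> (\<forall>\<alpha>\<in>A. c \<alpha> = 0))"

definition AGE_cone :: "('a::real_inner) set \<Rightarrow> 'a set \<Rightarrow> 'a \<Rightarrow> ('a \<Rightarrow> real) set" where
  "AGE_cone X A \<beta> = {c \<in> rvec A. (\<forall>x\<in>X. signomial A c x \<ge> 0) \<and> (\<forall>\<alpha>\<in>A - {\<beta>}. c \<alpha> \<ge> 0)}"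

definition N_set :: "('a::real_vector) set \<Rightarrow> 'a \<Rightarrow> ('a \<Rightarrow> real) set" where
  "N_set A \<beta> = {\<nu> \<in> rvec A. (\<forall>\<alpha>\<in>A - {\<beta>}. \<nu> \<alpha> \<ge> 0) \<and> (\<Sum>\<alpha>\<in>A. \<nu> \<alpha>) = 0}"

text \<open>Relative entropy D(nu, c) over the index set S, continuously extended, +infinity on
  negative entries.\<close>
definition rel_entr :: "'a set \<Rightarrow> ('a \<Rightarrow> real) \<Rightarrow> ('a \<Rightarrow> real) \<Rightarrow> ereal" where
  "rel_entr S \<nu> c =
     (if (\<exists>\<alpha>\<in>S. \<nu> \<alpha> < 0 \<or> c \<alpha> < 0) \<or> (\<exists>\<alpha>\<in>S. \<nu> \<alpha> > 0 \<and> c \<alpha> = 0) then \<infinity>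
      else ereal (\<Sum>\<alpha>\<in>S. if \<nu> \<alpha> = 0 then 0 else \<nu> \<alpha> * ln (\<nu> \<alpha> / c \<alpha>)))"

definition generates_extreme_ray :: "('a \<Rightarrow> real) set \<Rightarrow> ('a \<Rightarrow> real) \<Rightarrow> bool" where
  "generates_extreme_ray C c \<longleftrightarrow> c \<in> C \<and> c \<noteq> (\<lambda>_. 0) \<and>
     (\<forall>g\<in>C. \<forall>h\<in>C. c = (\<lambda>\<alpha>. g \<alpha> + h \<alpha>) \<longrightarrow>
        (\<exists>r\<ge>0. g = (\<lambda>\<alpha>. r * c \<alpha>)) \<and> (\<exists>r\<ge>0. h = (\<lambda>\<alpha>. r * c \<alpha>)))"

definition proportional :: "('a \<Rightarrow> real) \<Rightarrow> ('a \<Rightarrow> real) \<Rightarrow> bool" where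
  "proportional u v \<longleftrightarrow> (\<exists>r. u = (\<lambda>\<alpha>. r * v \<alpha>)) \<or> (\<exists>r. v = (\<lambda>\<alpha>. r * u \<alpha>))"

definition conv_fam :: "nat \<Rightarrow> (nat \<Rightarrow> 'a \<Rightarrow> real) \<Rightarrow> ('a \<Rightarrow> real) set" where
  "conv_fam k \<nu>s = {(\<lambda>\<alpha>. \<Sum>i<k. t i * \<nu>s i \<alpha>) | t. (\<forall>i<k. t i \<ge> 0) \<and> (\<Sum>i<k. t i) = 1}"

definition affine_on_ereal :: "('a \<Rightarrow> real) set \<Rightarrow> (('a \<Rightarrow> real) \<Rightarrow> ereal) \<Rightarrow> bool" where
  "affine_on_ereal S \<phi> \<longleftrightarrow> (\<forall>u\<in>S. \<forall>v\<in>S. \<forall>t::real. 0 \<le> t \<and> t \<le> 1 \<longrightarrow>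
      \<phi> (\<lambda>\<alpha>. t * u \<alpha> + (1 - t) * v \<alpha>) = ereal t * \<phi> u + ereal (1 - t) * \<phi> v)"

end

theory Submission
  imports Defs
begin

lemma term_bound:
  fixes g p s :: real
  assumes "g \<ge> 0" "p \<ge> 0" "p > 0 \<longrightarrow> g > 0"
  shows "g * exp s \<ge> p * s - p * ln (p / (exp 1 * g))"
proof (cases "p = 0")
  case True then show ?thesis using assms by simp
next
  case False
  then have p: "p > 0" using assms by simp
  then have g: "g > 0" using assms by simp
  define y where "y = s - ln (p / g)"
  have "exp y \<ge> 1 + y" by (rule exp_ge_add_one_self)
  have e: "g * exp s = p * exp y"
    using p g by (simp add: y_def exp_diff)
  have l: "ln (p / (exp 1 * g)) = ln (p / g) - 1"
    using p g by (simp add: ln_div ln_mult)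
  have "p * (1 + y) \<le> p * exp y" using p \<open>exp y \<ge> 1 + y\<close> by simp
  moreover have "p * (1 + y) = p + p * s - p * ln (p / g)" by (simp add: y_def algebra_simps)
  moreover have "p * ln (p / (exp 1 * g)) = p * (ln (p / g) - 1)" by (simp only: l)
  moreover have "p * (ln (p / g) - 1) = p * ln (p / g) - p" by (simp add: right_diff_distrib)
  ultimately show ?thesis using e by linarith
qed

lemma suff:
  fixes A :: "(real ^ 'n) set" and g p :: "real ^ 'n \<Rightarrow> real"
  assumes fin: "finite A" and b: "\<beta> \<in> A"
    and g0: "\<forall>\<alpha>\<in>A - {\<beta>}. g \<alpha> \<ge> 0" and p0: "\<forall>\<alpha>\<in>A - {\<beta>}. p \<alpha> \<ge> 0"
    and pg: "\<forall>\<alpha>\<in>A - {\<beta>}. p \<alpha> > 0 \<longrightarrow> g \<alpha> > 0"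
    and ps: "(\<Sum>\<alpha>\<in>A. p \<alpha>) = 0"
    and Sx: "- (Amap A p \<bullet> x) \<le> S"
    and Sg: "S + (\<Sum>\<alpha>\<in>A - {\<beta>}. p \<alpha> * ln (p \<alpha> / (exp 1 * g \<alpha>))) \<le> g \<beta>"
  shows "signomial A g x \<ge> 0"
proof -
  let ?B = "A - {\<beta>}"
  have fB: "finite ?B" using fin by simp
  have tb: "\<forall>\<alpha>\<in>?B. g \<alpha> * exp ((\<alpha> - \<beta>) \<bullet> x) \<ge> p \<alpha> * ((\<alpha> - \<beta>) \<bullet> x) - p \<alpha> * ln (p \<alpha> / (exp 1 * g \<alpha>))"
    using term_bound g0 p0 pg by blast
  have s1: "(\<Sum>\<alpha>\<in>?B. g \<alpha> * exp ((\<alpha> - \<beta>) \<bullet> x)) \<ge> (\<Sum>\<alpha>\<in>?B. p \<alpha> * ((\<alpha> - \<beta>) \<bullet> x)) - (\<Sum>\<alpha>\<in>?B. p \<alpha> * ln (p \<alpha> / (exp 1 * g \<alpha>)))"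
  proof -
    have "(\<Sum>\<alpha>\<in>?B. p \<alpha> * ((\<alpha> - \<beta>) \<bullet> x) - p \<alpha> * ln (p \<alpha> / (exp 1 * g \<alpha>))) \<le> (\<Sum>\<alpha>\<in>?B. g \<alpha> * exp ((\<alpha> - \<beta>) \<bullet> x))"
      by (rule sum_mono) (use tb in blast)
    then show ?thesis by (simp add: sum_subtractf)
  qed
  have pb: "p \<beta> = - (\<Sum>\<alpha>\<in>?B. p \<alpha>)"
    using ps sum.remove[OF fin b, of p] by simp
  have "(\<Sum>\<alpha>\<in>?B. p \<alpha> * ((\<alpha> - \<beta>) \<bullet> x)) = (\<Sum>\<alpha>\<in>?B. p \<alpha> * (\<alpha> \<bullet> x)) - (\<Sum>\<alpha>\<in>?B. p \<alpha>) * (\<beta> \<bullet> x)"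
  proof -
    have "(\<Sum>\<alpha>\<in>?B. p \<alpha>) * (\<beta> \<bullet> x) = (\<Sum>\<alpha>\<in>?B. p \<alpha> * (\<beta> \<bullet> x))" by (simp add: sum_distrib_right)
    moreover have "(\<Sum>\<alpha>\<in>?B. p \<alpha> * ((\<alpha> - \<beta>) \<bullet> x)) = (\<Sum>\<alpha>\<in>?B. p \<alpha> * (\<alpha> \<bullet> x) - p \<alpha> * (\<beta> \<bullet> x))"
      by (simp add: inner_diff_left right_diff_distrib)
    ultimately show ?thesis by (simp add: sum_subtractf)
  qed
  also have "\<dots> = (\<Sum>\<alpha>\<in>A. p \<alpha> * (\<alpha> \<bullet> x))"
    using pb sum.remove[OF fin b, of "\<lambda>\<alpha>. p \<alpha> * (\<alpha> \<bullet> x)"] by simp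
  also have "\<dots> = Amap A p \<bullet> x"
    by (simp add: Amap_def inner_sum_left)
  finally have s2: "(\<Sum>\<alpha>\<in>?B. p \<alpha> * ((\<alpha> - \<beta>) \<bullet> x)) = Amap A p \<bullet> x" .
  have pos: "g \<beta> + (\<Sum>\<alpha>\<in>?B. g \<alpha> * exp ((\<alpha> - \<beta>) \<bullet> x)) \<ge> 0"
    using s1 s2 Sx Sg by linarith
  have "signomial A g x = g \<beta> * exp (\<beta> \<bullet> x) + (\<Sum>\<alpha>\<in>?B. g \<alpha> * exp (\<alpha> \<bullet> x))"
    unfolding signomial_def using sum.remove[OF fin b] by simp
  also have "\<dots> = exp (\<beta> \<bullet> x) * (g \<beta> + (\<Sum>\<alpha>\<in>?B. g \<alpha> * exp ((\<alpha> - \<beta>) \<bullet> x)))"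
    by (simp add: sum_distrib_left inner_diff_left exp_diff algebra_simps)
  finally show ?thesis using pos by simp
qed


lemma split_not_extreme:
  fixes X A :: "(real ^ 'n) set" and c \<nu> p :: "real ^ 'n \<Rightarrow> real"
  assumes fin: "finite A" and b: "\<beta> \<in> A" and cA: "c \<in> AGE_cone X A \<beta>"
    and \<nu>r: "\<nu> \<in> rvec A" and pr: "p \<in> rvec A"
    and p0: "\<forall>\<alpha>\<in>A - {\<beta>}. p \<alpha> \<ge> 0" and pn: "\<forall>\<alpha>\<in>A - {\<beta>}. p \<alpha> \<le> \<nu> \<alpha>"
    and cpos: "\<forall>\<alpha>\<in>A - {\<beta>}. \<nu> \<alpha> > 0 \<longrightarrow> c \<alpha> > 0"
    and ps: "(\<Sum>\<alpha>\<in>A. p \<alpha>) = 0" and \<nu>s: "(\<Sum>\<alpha>\<in>A. \<nu> \<alpha>) = 0"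
    and Sp: "\<forall>x\<in>X. - (Amap A p \<bullet> x) \<le> Sp"
    and Sq: "\<forall>x\<in>X. - (Amap A (\<lambda>\<alpha>. \<nu> \<alpha> - p \<alpha>) \<bullet> x) \<le> Sq"
    and main: "Sp + Sq + (\<Sum>\<alpha>\<in>A - {\<beta>}. if \<nu> \<alpha> = 0 then 0 else \<nu> \<alpha> * ln (\<nu> \<alpha> / (exp 1 * c \<alpha>))) \<le> c \<beta>"
    and np: "\<forall>r. p \<noteq> (\<lambda>\<alpha>. r * \<nu> \<alpha>)"
  shows "\<not> generates_extreme_ray (AGE_cone X A \<beta>) c"
proof
  assume ext: "generates_extreme_ray (AGE_cone X A \<beta>) c"
  let ?B = "A - {\<beta>}"
  define q where "q = (\<lambda>\<alpha>. \<nu> \<alpha> - p \<alpha>)"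
  define g0 where "g0 = (\<lambda>\<alpha>. if \<alpha> \<in> ?B \<and> \<nu> \<alpha> > 0 then p \<alpha> * c \<alpha> / \<nu> \<alpha> else 0)"
  define g where "g = g0(\<beta> := Sp + (\<Sum>\<alpha>\<in>?B. p \<alpha> * ln (p \<alpha> / (exp 1 * g0 \<alpha>))))"
  define h where "h = (\<lambda>\<alpha>. c \<alpha> - g \<alpha>)"
  have cr: "c \<in> rvec A" and cn: "\<forall>\<alpha>\<in>?B. c \<alpha> \<ge> 0" and cX: "\<forall>x\<in>X. signomial A c x \<ge> 0"
    using cA by (auto simp: AGE_cone_def)
  have \<nu>0: "\<forall>\<alpha>\<in>?B. \<nu> \<alpha> \<ge> 0" using p0 pn by (meson order_trans)
  have q0: "\<forall>\<alpha>\<in>?B. q \<alpha> \<ge> 0" using pn by (simp add: q_def)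
  have qs: "(\<Sum>\<alpha>\<in>A. q \<alpha>) = 0" using ps \<nu>s by (simp add: q_def sum_subtractf)
  have gB: "\<forall>\<alpha>\<in>?B. g \<alpha> = g0 \<alpha>" by (simp add: g_def)
  have hB: "\<forall>\<alpha>\<in>?B. \<nu> \<alpha> > 0 \<longrightarrow> h \<alpha> = q \<alpha> * c \<alpha> / \<nu> \<alpha>"
    by (auto simp: h_def g_def g0_def q_def field_simps)
  have hB0: "\<forall>\<alpha>\<in>?B. \<nu> \<alpha> = 0 \<longrightarrow> h \<alpha> = c \<alpha>"
    by (auto simp: h_def g_def g0_def)
  have termp: "\<forall>\<alpha>\<in>?B. p \<alpha> * ln (p \<alpha> / (exp 1 * g \<alpha>)) = (if \<nu> \<alpha> = 0 then 0 else p \<alpha> * ln (\<nu> \<alpha> / (exp 1 * c \<alpha>)))"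
  proof
    fix \<alpha> assume a: "\<alpha> \<in> ?B"
    show "p \<alpha> * ln (p \<alpha> / (exp 1 * g \<alpha>)) = (if \<nu> \<alpha> = 0 then 0 else p \<alpha> * ln (\<nu> \<alpha> / (exp 1 * c \<alpha>)))"
    proof (cases "p \<alpha> = 0")
      case True then show ?thesis by simp
    next
      case False
      then have pp: "p \<alpha> > 0" using p0 a by force
      then have vp: "\<nu> \<alpha> > 0" using pn a by force
      then have cp: "c \<alpha> > 0" using cpos a by blast
      have "g \<alpha> = p \<alpha> * c \<alpha> / \<nu> \<alpha>" using a vp by (simp add: g_def g0_def)
      moreover have "p \<alpha> / (exp 1 * (p \<alpha> * c \<alpha> / \<nu> \<alpha>)) = \<nu> \<alpha> / (exp 1 * c \<alpha>)" using pp vp cp by (simp add: field_simps)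
      ultimately show ?thesis using vp by simp
    qed
  qed
  have termq: "\<forall>\<alpha>\<in>?B. q \<alpha> * ln (q \<alpha> / (exp 1 * h \<alpha>)) = (if \<nu> \<alpha> = 0 then 0 else q \<alpha> * ln (\<nu> \<alpha> / (exp 1 * c \<alpha>)))"
  proof
    fix \<alpha> assume a: "\<alpha> \<in> ?B"
    show "q \<alpha> * ln (q \<alpha> / (exp 1 * h \<alpha>)) = (if \<nu> \<alpha> = 0 then 0 else q \<alpha> * ln (\<nu> \<alpha> / (exp 1 * c \<alpha>)))"
    proof (cases "q \<alpha> = 0")
      case True then show ?thesis by simp
    next
      case False
      then have pp: "q \<alpha> > 0" using q0 a by force
      then have vp: "\<nu> \<alpha> > 0" using p0 a by (force simp: q_def)
      then have cp: "c \<alpha> > 0" using cpos a by blast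
      have "h \<alpha> = q \<alpha> * c \<alpha> / \<nu> \<alpha>" using a vp hB by blast
      moreover have "q \<alpha> / (exp 1 * (q \<alpha> * c \<alpha> / \<nu> \<alpha>)) = \<nu> \<alpha> / (exp 1 * c \<alpha>)" using pp vp cp by (simp add: field_simps)
      ultimately show ?thesis using vp by simp
    qed
  qed
  have Dsum: "(\<Sum>\<alpha>\<in>?B. p \<alpha> * ln (p \<alpha> / (exp 1 * g \<alpha>))) + (\<Sum>\<alpha>\<in>?B. q \<alpha> * ln (q \<alpha> / (exp 1 * h \<alpha>)))
      = (\<Sum>\<alpha>\<in>?B. if \<nu> \<alpha> = 0 then 0 else \<nu> \<alpha> * ln (\<nu> \<alpha> / (exp 1 * c \<alpha>)))"
  proof -
    have "(\<Sum>\<alpha>\<in>?B. p \<alpha> * ln (p \<alpha> / (exp 1 * g \<alpha>))) + (\<Sum>\<alpha>\<in>?B. q \<alpha> * ln (q \<alpha> / (exp 1 * h \<alpha>)))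
       = (\<Sum>\<alpha>\<in>?B. p \<alpha> * ln (p \<alpha> / (exp 1 * g \<alpha>)) + q \<alpha> * ln (q \<alpha> / (exp 1 * h \<alpha>)))"
      by (simp add: sum.distrib)
    also have "\<dots> = (\<Sum>\<alpha>\<in>?B. if \<nu> \<alpha> = 0 then 0 else \<nu> \<alpha> * ln (\<nu> \<alpha> / (exp 1 * c \<alpha>)))"
    proof (rule sum.cong)
      fix \<alpha> assume a: "\<alpha> \<in> ?B"
      show "p \<alpha> * ln (p \<alpha> / (exp 1 * g \<alpha>)) + q \<alpha> * ln (q \<alpha> / (exp 1 * h \<alpha>)) =
         (if \<nu> \<alpha> = 0 then 0 else \<nu> \<alpha> * ln (\<nu> \<alpha> / (exp 1 * c \<alpha>)))"
        using termp[rule_format, OF a] termq[rule_format, OF a]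
        by (simp add: q_def algebra_simps)
    qed simp
    finally show ?thesis .
  qed
  have gbeta: "g \<beta> = Sp + (\<Sum>\<alpha>\<in>?B. p \<alpha> * ln (p \<alpha> / (exp 1 * g \<alpha>)))"
  proof -
    have "(\<Sum>\<alpha>\<in>?B. p \<alpha> * ln (p \<alpha> / (exp 1 * g \<alpha>))) = (\<Sum>\<alpha>\<in>?B. p \<alpha> * ln (p \<alpha> / (exp 1 * g0 \<alpha>)))"
      by (rule sum.cong) (simp_all add: gB)
    then show ?thesis by (simp add: g_def)
  qed
  have gr: "g \<in> rvec A" using b by (auto simp: rvec_def g_def g0_def)
  have gn: "\<forall>\<alpha>\<in>?B. g \<alpha> \<ge> 0"
    using p0 cn by (auto simp: g_def g0_def)
  have gpos: "\<forall>\<alpha>\<in>?B. p \<alpha> > 0 \<longrightarrow> g \<alpha> > 0"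
  proof (intro ballI impI)
    fix \<alpha> assume a: "\<alpha> \<in> ?B" and pp: "p \<alpha> > 0"
    then have vp: "\<nu> \<alpha> > 0" using pn by force
    then have "c \<alpha> > 0" using cpos a by blast
    then show "g \<alpha> > 0" using a vp pp by (simp add: g_def g0_def)
  qed
  have gC: "g \<in> AGE_cone X A \<beta>"
    unfolding AGE_cone_def
  proof (intro CollectI conjI ballI gr)
    fix x assume "x \<in> X"
    show "signomial A g x \<ge> 0"
      by (rule suff[OF fin b gn p0 gpos ps]) (use Sp \<open>x \<in> X\<close> gbeta in auto)
  qed (use gn in auto)
  have hr: "h \<in> rvec A" using cr gr by (auto simp: rvec_def h_def)
  have hn: "\<forall>\<alpha>\<in>?B. h \<alpha> \<ge> 0"
  proof
    fix \<alpha> assume a: "\<alpha> \<in> ?B"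
    show "h \<alpha> \<ge> 0"
    proof (cases "\<nu> \<alpha> = 0")
      case True then show ?thesis using hB0 a cn by auto
    next
      case False then have "\<nu> \<alpha> > 0" using \<nu>0 a by force
      then show ?thesis using hB a q0 cn by auto
    qed
  qed
  have hpos: "\<forall>\<alpha>\<in>?B. q \<alpha> > 0 \<longrightarrow> h \<alpha> > 0"
  proof (intro ballI impI)
    fix \<alpha> assume a: "\<alpha> \<in> ?B" and pp: "q \<alpha> > 0"
    then have vp: "\<nu> \<alpha> > 0" using p0 by (force simp: q_def)
    then have "c \<alpha> > 0" using cpos a by blast
    then show "h \<alpha> > 0" using a vp pp hB by simp
  qed
  have hbeta: "Sq + (\<Sum>\<alpha>\<in>?B. q \<alpha> * ln (q \<alpha> / (exp 1 * h \<alpha>))) \<le> h \<beta>"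
    using main Dsum gbeta by (simp add: h_def)
  have hC: "h \<in> AGE_cone X A \<beta>"
    unfolding AGE_cone_def
  proof (intro CollectI conjI ballI hr)
    fix x assume "x \<in> X"
    show "signomial A h x \<ge> 0"
      by (rule suff[OF fin b hn q0 hpos qs]) (use Sq \<open>x \<in> X\<close> hbeta in \<open>auto simp: q_def\<close>)
  qed (use hn in auto)
  have "c = (\<lambda>\<alpha>. g \<alpha> + h \<alpha>)" by (simp add: h_def)
  then obtain r where r: "r \<ge> 0" "g = (\<lambda>\<alpha>. r * c \<alpha>)"
    using ext gC hC unfolding generates_extreme_ray_def by blast
  have offb: "\<forall>\<alpha>\<in>?B. p \<alpha> = r * \<nu> \<alpha>"
  proof
    fix \<alpha> assume a: "\<alpha> \<in> ?B"
    show "p \<alpha> = r * \<nu> \<alpha>"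
    proof (cases "\<nu> \<alpha> = 0")
      case True then show ?thesis using p0 pn a by force
    next
      case False then have vp: "\<nu> \<alpha> > 0" using \<nu>0 a by force
      then have cp: "c \<alpha> > 0" using cpos a by blast
      have "g \<alpha> = p \<alpha> * c \<alpha> / \<nu> \<alpha>" using a vp by (simp add: g_def g0_def)
      moreover have "g \<alpha> = r * c \<alpha>" using r(2) by simp
      ultimately have "p \<alpha> * c \<alpha> / \<nu> \<alpha> = r * c \<alpha>" by simp
      then show ?thesis using vp cp by (simp add: field_simps)
    qed
  qed
  have "p = (\<lambda>\<alpha>. r * \<nu> \<alpha>)"
  proof
    fix \<alpha>
    show "p \<alpha> = r * \<nu> \<alpha>"
    proof (cases "\<alpha> \<in> A")
      case False then show ?thesis using pr \<nu>r by (simp add: rvec_def)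
    next
      case True
      show ?thesis
      proof (cases "\<alpha> = \<beta>")
        case False then show ?thesis using True offb by blast
      next
        case T2: True
        have "p \<beta> = - (\<Sum>\<alpha>\<in>?B. p \<alpha>)" using ps sum.remove[OF fin b, of p] by simp
        also have "\<dots> = - (\<Sum>\<alpha>\<in>?B. r * \<nu> \<alpha>)" using offb by simp
        also have "\<dots> = r * \<nu> \<beta>" using \<nu>s sum.remove[OF fin b, of \<nu>] by (simp add: sum_distrib_left[symmetric]) (metis add.commute add_eq_0_iff minus_mult_right)
        finally show ?thesis using T2 by simp
      qed
    qed
  qed
  then show False using np by blast
qed


lemma supp_upper: "x \<in> X \<Longrightarrow> ereal (y \<bullet> x) \<le> supp_fun X y"
  unfolding supp_fun_def by (rule SUP_upper)

lemma supp_not_minf: "X \<noteq> {} \<Longrightarrow> supp_fun X y \<noteq> -\<infinity>"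
proof -
  assume "X \<noteq> {}" then obtain x where "x \<in> X" by blast
  then have "ereal (y \<bullet> x) \<le> supp_fun X y" by (rule supp_upper)
  then show ?thesis by auto
qed

lemma supp_real_bound: "supp_fun X y = ereal S \<Longrightarrow> x \<in> X \<Longrightarrow> y \<bullet> x \<le> S"
  using supp_upper[of x X y] by simp

lemma Amap_scale: "Amap A (\<lambda>\<alpha>. t * u \<alpha>) = t *\<^sub>R Amap A u"
  by (simp add: Amap_def scaleR_sum_right)

theorem lemma4p1:
  fixes X :: "(real ^ 'n) set" and A :: "(real ^ 'n) set" and \<beta> :: "real ^ 'n"
    and c \<nu> :: "real ^ 'n \<Rightarrow> real"
    and k :: nat and \<theta> :: "nat \<Rightarrow> real" and \<nu>s :: "nat \<Rightarrow> real ^ 'n \<Rightarrow> real"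
  assumes "X \<noteq> {}" and "closed X" and "convex X"
    and "finite A" and "A \<noteq> {}" and "exp_lin_indep X A"
    and "\<beta> \<in> A"
    and "c \<in> AGE_cone X A \<beta>" and "c \<beta> < 0"
    and "\<nu> \<in> rvec A" and "(\<Sum>\<alpha>\<in>A. \<nu> \<alpha>) = 0" and "\<nu> \<noteq> (\<lambda>_. 0)"
    and "supp_fun X (- Amap A \<nu>) + rel_entr (A - {\<beta>}) \<nu> (\<lambda>\<alpha>. exp 1 * c \<alpha>) \<le> ereal (c \<beta>)"
    and "k \<ge> 2"
    and "\<forall>i<k. \<theta> i > 0" and "(\<Sum>i<k. \<theta> i) = 1"
    and "\<forall>i<k. \<nu>s i \<in> N_set A \<beta>"
    and "\<forall>i<k. \<forall>j<k. i \<noteq> j \<longrightarrow> \<not> proportional (\<nu>s i) (\<nu>s j)"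
    and "\<nu> = (\<lambda>\<alpha>. \<Sum>i<k. \<theta> i * \<nu>s i \<alpha>)"
    and "affine_on_ereal (conv_fam k \<nu>s) (\<lambda>\<mu>. supp_fun X (- Amap A \<mu>))"
  shows "\<not> generates_extreme_ray (AGE_cone X A \<beta>) c"
proof -
  note Xne = assms(1) and fin = assms(4) and b = assms(7) and cA = assms(8)
    and \<nu>r = assms(10) and \<nu>sum = assms(11) and H = assms(13) and k2 = assms(14)
    and \<theta>pos = assms(15) and \<theta>sum = assms(16) and NS = assms(17) and np = assms(18)
    and \<nu>def = assms(19) and aff = assms(20)
  let ?B = "A - {\<beta>}"
  let ?D = "(\<Sum>\<alpha>\<in>?B. if \<nu> \<alpha> = 0 then 0 else \<nu> \<alpha> * ln (\<nu> \<alpha> / (exp 1 * c \<alpha>)))"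
  let ?\<sigma> = "\<lambda>\<mu>. supp_fun X (- Amap A \<mu>)"
  have s\<nu>m: "?\<sigma> \<nu> \<noteq> -\<infinity>" using supp_not_minf[OF Xne] .
  have REfin: "rel_entr ?B \<nu> (\<lambda>\<alpha>. exp 1 * c \<alpha>) \<noteq> \<infinity>"
  proof
    assume "rel_entr ?B \<nu> (\<lambda>\<alpha>. exp 1 * c \<alpha>) = \<infinity>"
    with H s\<nu>m show False by simp
  qed
  then have conds: "\<not> ((\<exists>\<alpha>\<in>?B. \<nu> \<alpha> < 0 \<or> exp 1 * c \<alpha> < 0) \<or> (\<exists>\<alpha>\<in>?B. \<nu> \<alpha> > 0 \<and> exp 1 * c \<alpha> = 0))"
    unfolding rel_entr_def by (auto split: if_splits)
  then have REeq: "rel_entr ?B \<nu> (\<lambda>\<alpha>. exp 1 * c \<alpha>) = ereal ?D"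
    unfolding rel_entr_def by simp
  have cpos: "\<forall>\<alpha>\<in>?B. \<nu> \<alpha> > 0 \<longrightarrow> c \<alpha> > 0"
  proof (intro ballI impI)
    fix \<alpha> assume a: "\<alpha> \<in> ?B" and "\<nu> \<alpha> > 0"
    have h1: "\<not> exp 1 * c \<alpha> < 0" using conds a by blast
    have h2: "c \<alpha> \<noteq> 0" using conds a \<open>\<nu> \<alpha> > 0\<close> by auto
    show "c \<alpha> > 0"
    proof (rule ccontr)
      assume "\<not> c \<alpha> > 0"
      then have "c \<alpha> < 0" using h2 by simp
      then have "exp 1 * c \<alpha> < 0" by (simp add: mult_pos_neg)
      with h1 show False by simp
    qed
  qed
  have "?\<sigma> \<nu> \<noteq> \<infinity>"
  proof
    assume "?\<sigma> \<nu> = \<infinity>"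
    with H REeq show False by simp
  qed
  with s\<nu>m obtain S\<nu> where S\<nu>: "?\<sigma> \<nu> = ereal S\<nu>" by (cases "?\<sigma> \<nu>") auto
  have SD: "S\<nu> + ?D \<le> c \<beta>" using H S\<nu> REeq by simp
  define pf where "pf = (\<lambda>i \<alpha>. \<theta> i * \<nu>s i \<alpha>)"
  have nz: "\<forall>i<k. \<nu>s i \<noteq> (\<lambda>_. 0)"
  proof (intro allI impI)
    fix i assume i: "i < k"
    define j where "j = (if i = 0 then 1 else 0::nat)"
    have j: "j < k" "j \<noteq> i" using k2 i by (auto simp: j_def)
    show "\<nu>s i \<noteq> (\<lambda>_. 0)"
    proof
      assume "\<nu>s i = (\<lambda>_. 0)"
      then have "proportional (\<nu>s i) (\<nu>s j)" unfolding proportional_def by (intro disjI1 exI[of _ 0]) simp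
      with np i j show False by blast
    qed
  qed
  have "\<exists>i<k. \<forall>r. pf i \<noteq> (\<lambda>\<alpha>. r * \<nu> \<alpha>)"
  proof (rule ccontr)
    assume "\<not> ?thesis"
    then obtain r0 r1 where r0: "pf 0 = (\<lambda>\<alpha>. r0 * \<nu> \<alpha>)" and r1: "pf 1 = (\<lambda>\<alpha>. r1 * \<nu> \<alpha>)"
      using k2 by (metis less_le_trans one_less_numeral_iff pos2 semiring_norm(76))
    have t0: "\<theta> 0 > 0" "\<theta> 1 > 0" using \<theta>pos k2 by auto
    have "r1 \<noteq> 0"
    proof
      assume "r1 = 0"
      then have "\<nu>s 1 = (\<lambda>_. 0)" using r1 t0 unfolding pf_def by (auto simp: fun_eq_iff)
      with nz k2 show False by auto
    qed
    have "\<nu>s 0 = (\<lambda>\<alpha>. (r0 * \<theta> 1 / (\<theta> 0 * r1)) * \<nu>s 1 \<alpha>)"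
    proof
      fix \<alpha>
      have a: "\<theta> 0 * \<nu>s 0 \<alpha> = r0 * \<nu> \<alpha>" "\<theta> 1 * \<nu>s 1 \<alpha> = r1 * \<nu> \<alpha>"
        using fun_cong[OF r0, of \<alpha>] fun_cong[OF r1, of \<alpha>] by (auto simp: pf_def)
      then show "\<nu>s 0 \<alpha> = (r0 * \<theta> 1 / (\<theta> 0 * r1)) * \<nu>s 1 \<alpha>"
        using t0 \<open>r1 \<noteq> 0\<close> by (simp add: field_simps)
    qed
    then have "proportional (\<nu>s 0) (\<nu>s 1)" unfolding proportional_def by blast
    with np k2 show False by auto
  qed
  then obtain i where i: "i < k" and npi: "\<forall>r. pf i \<noteq> (\<lambda>\<alpha>. r * \<nu> \<alpha>)" by blast
  define t where "t = \<theta> i"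
  have tpos: "t > 0" using \<theta>pos i by (simp add: t_def)
  have tlt: "t < 1"
  proof -
    define j where "j = (if i = 0 then 1 else 0::nat)"
    have j: "j < k" "j \<noteq> i" using k2 i by (auto simp: j_def)
    have "(\<Sum>l\<in>{i, j}. \<theta> l) \<le> (\<Sum>l<k. \<theta> l)"
      by (rule sum_mono2) (use i j \<theta>pos in \<open>auto intro: less_imp_le\<close>)
    then show ?thesis using j \<theta>pos \<theta>sum by (simp add: t_def) (smt (verit))
  qed
  define tw where "tw = (\<lambda>j. if j = i then 0 else \<theta> j / (1 - t))"
  define w where "w = (\<lambda>\<alpha>. \<Sum>j<k. tw j * \<nu>s j \<alpha>)"
  have uC: "\<nu>s i \<in> conv_fam k \<nu>s"
    unfolding conv_fam_def
  proof (intro CollectI exI[of _ "\<lambda>j. if j = i then 1 else 0"] conjI)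
    show "\<nu>s i = (\<lambda>\<alpha>. \<Sum>j<k. (if j = i then 1 else 0) * \<nu>s j \<alpha>)" proof
      fix x
      have "(\<Sum>j<k. (if j = i then 1 else 0) * \<nu>s j x) = (\<Sum>j<k. if j = i then \<nu>s j x else 0)"
        by (rule sum.cong) auto
      also have "\<dots> = \<nu>s i x" using i by (simp add: sum.delta)
      finally show "\<nu>s i x = (\<Sum>j<k. (if j = i then 1 else 0) * \<nu>s j x)" by simp
    qed
  qed (use i in auto)
  have wC: "w \<in> conv_fam k \<nu>s"
    unfolding conv_fam_def
  proof (intro CollectI exI[of _ tw] conjI)
    show "w = (\<lambda>\<alpha>. \<Sum>j<k. tw j * \<nu>s j \<alpha>)" by (simp add: w_def)
    show "\<forall>j<k. tw j \<ge> 0" using \<theta>pos tlt by (auto simp: tw_def intro: less_imp_le)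
    have "(\<Sum>j<k. tw j) = (\<Sum>j\<in>{..<k} - {i}. \<theta> j / (1 - t))"
      using sum.remove[of "{..<k}" i tw] i by (simp add: tw_def)
    also have "\<dots> = (\<Sum>j\<in>{..<k} - {i}. \<theta> j) / (1 - t)" by (simp add: sum_divide_distrib)
    also have "(\<Sum>j\<in>{..<k} - {i}. \<theta> j) = 1 - t"
      using sum.remove[of "{..<k}" i \<theta>] i \<theta>sum by (simp add: t_def)
    finally show "(\<Sum>j<k. tw j) = 1" using tlt by simp
  qed
  have key: "\<And>\<alpha>. \<nu> \<alpha> - pf i \<alpha> = (1 - t) * w \<alpha>"
  proof -
    fix \<alpha>
    have "(1 - t) * w \<alpha> = (\<Sum>j<k. (1 - t) * tw j * \<nu>s j \<alpha>)"
      by (simp add: w_def sum_distrib_left mult.assoc)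
    also have "\<dots> = (\<Sum>j\<in>{..<k} - {i}. \<theta> j * \<nu>s j \<alpha>)"
    proof -
      have "(\<Sum>j<k. (1 - t) * tw j * \<nu>s j \<alpha>) = (\<Sum>j\<in>{..<k} - {i}. (1 - t) * tw j * \<nu>s j \<alpha>)"
        using sum.remove[of "{..<k}" i "\<lambda>j. (1 - t) * tw j * \<nu>s j \<alpha>"] i by (simp add: tw_def)
      also have "\<dots> = (\<Sum>j\<in>{..<k} - {i}. \<theta> j * \<nu>s j \<alpha>)"
        by (rule sum.cong) (use tlt in \<open>auto simp: tw_def\<close>)
      finally show ?thesis .
    qed
    also have "\<dots> = \<nu> \<alpha> - pf i \<alpha>"
      using sum.remove[of "{..<k}" i "\<lambda>j. \<theta> j * \<nu>s j \<alpha>"] i \<nu>def by (simp add: pf_def)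
    finally show "\<nu> \<alpha> - pf i \<alpha> = (1 - t) * w \<alpha>" by simp
  qed
  have comb: "(\<lambda>\<alpha>. t * \<nu>s i \<alpha> + (1 - t) * w \<alpha>) = \<nu>"
  proof
    fix \<alpha> show "t * \<nu>s i \<alpha> + (1 - t) * w \<alpha> = \<nu> \<alpha>" using key[of \<alpha>] by (simp add: pf_def t_def)
  qed
  have affeq: "?\<sigma> \<nu> = ereal t * ?\<sigma> (\<nu>s i) + ereal (1 - t) * ?\<sigma> w"
  proof -
    have A1: "?\<sigma> (\<lambda>\<alpha>. t * \<nu>s i \<alpha> + (1 - t) * w \<alpha>) = ereal t * ?\<sigma> (\<nu>s i) + ereal (1 - t) * ?\<sigma> w"
      using aff[unfolded affine_on_ereal_def, rule_format, OF uC wC, of t] tpos tlt by simp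
    then show ?thesis by (simp only: comb)
  qed
  have um: "?\<sigma> (\<nu>s i) \<noteq> -\<infinity>" "?\<sigma> w \<noteq> -\<infinity>" using supp_not_minf[OF Xne] by auto
  have "?\<sigma> (\<nu>s i) \<noteq> \<infinity>"
  proof
    assume "?\<sigma> (\<nu>s i) = \<infinity>"
    then have "ereal t * ?\<sigma> (\<nu>s i) = \<infinity>" using tpos by simp
    moreover have "ereal (1 - t) * ?\<sigma> w \<noteq> -\<infinity>" using um tlt by (cases "?\<sigma> w") auto
    ultimately have "ereal t * ?\<sigma> (\<nu>s i) + ereal (1 - t) * ?\<sigma> w = \<infinity>"
      by (cases "ereal (1 - t) * ?\<sigma> w") auto
    with affeq have "?\<sigma> \<nu> = \<infinity>" by (rule trans)
    then show False using S\<nu> by simp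
  qed
  with um obtain Su where Su: "?\<sigma> (\<nu>s i) = ereal Su" by (cases "?\<sigma> (\<nu>s i)") auto
  have "?\<sigma> w \<noteq> \<infinity>"
  proof
    assume "?\<sigma> w = \<infinity>"
    then have "ereal (1 - t) * ?\<sigma> w = \<infinity>" using tlt by simp
    then have "ereal t * ?\<sigma> (\<nu>s i) + ereal (1 - t) * ?\<sigma> w = \<infinity>" using Su by simp
    with affeq have "?\<sigma> \<nu> = \<infinity>" by (rule trans)
    then show False using S\<nu> by simp
  qed
  with um obtain Sw where Sw: "?\<sigma> w = ereal Sw" by (cases "?\<sigma> w") auto
  have Seq: "S\<nu> = t * Su + (1 - t) * Sw" using affeq S\<nu> Su Sw by simp
  have Ni: "\<nu>s i \<in> rvec A" "\<forall>\<alpha>\<in>?B. \<nu>s i \<alpha> \<ge> 0" "(\<Sum>\<alpha>\<in>A. \<nu>s i \<alpha>) = 0"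
    using NS i by (auto simp: N_set_def)
  show ?thesis
  proof (rule split_not_extreme[OF fin b cA \<nu>r, where p = "pf i" and Sp = "t * Su" and Sq = "(1 - t) * Sw"])
    show "pf i \<in> rvec A" using Ni by (auto simp: rvec_def pf_def)
    show "\<forall>\<alpha>\<in>?B. pf i \<alpha> \<ge> 0"
    proof
      fix \<alpha> assume a: "\<alpha> \<in> ?B"
      have "\<theta> i \<ge> 0" using \<theta>pos i by (simp add: less_imp_le)
      moreover have "\<nu>s i \<alpha> \<ge> 0" using Ni a by blast
      ultimately show "pf i \<alpha> \<ge> 0" by (simp add: pf_def)
    qed
    have w0: "\<forall>\<alpha>\<in>?B. w \<alpha> \<ge> 0"
    proof
      fix \<alpha> assume a: "\<alpha> \<in> ?B"
      have "\<forall>j<k. tw j * \<nu>s j \<alpha> \<ge> 0"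
      proof (intro allI impI)
        fix j assume j: "j < k"
        have "tw j \<ge> 0" using \<theta>pos tlt j by (simp add: tw_def less_imp_le)
        moreover have "\<nu>s j \<alpha> \<ge> 0" using NS a j by (auto simp: N_set_def)
        ultimately show "tw j * \<nu>s j \<alpha> \<ge> 0" by simp
      qed
      then show "w \<alpha> \<ge> 0" unfolding w_def by (intro sum_nonneg) auto
    qed
    show "\<forall>\<alpha>\<in>?B. pf i \<alpha> \<le> \<nu> \<alpha>"
    proof
      fix \<alpha> assume a: "\<alpha> \<in> ?B"
      have "(1 - t) * w \<alpha> \<ge> 0" using w0 a tlt by simp
      then show "pf i \<alpha> \<le> \<nu> \<alpha>" using key[of \<alpha>] by linarith
    qed
    show "\<forall>\<alpha>\<in>?B. \<nu> \<alpha> > 0 \<longrightarrow> c \<alpha> > 0" by (rule cpos)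
    show "(\<Sum>\<alpha>\<in>A. pf i \<alpha>) = 0" using Ni by (simp add: pf_def sum_distrib_left[symmetric])
    show "(\<Sum>\<alpha>\<in>A. \<nu> \<alpha>) = 0" by (rule \<nu>sum)
    show "\<forall>x\<in>X. - (Amap A (pf i) \<bullet> x) \<le> t * Su"
    proof
      fix x assume x: "x \<in> X"
      have "- Amap A (\<nu>s i) \<bullet> x \<le> Su" using supp_real_bound[OF Su x] .
      moreover have "Amap A (pf i) = t *\<^sub>R Amap A (\<nu>s i)"
        unfolding pf_def t_def by (rule Amap_scale)
      ultimately show "- (Amap A (pf i) \<bullet> x) \<le> t * Su"
        using tpos mult_left_mono[of "- (Amap A (\<nu>s i) \<bullet> x)" Su t] by simp
    qed
    show "\<forall>x\<in>X. - (Amap A (\<lambda>\<alpha>. \<nu> \<alpha> - pf i \<alpha>) \<bullet> x) \<le> (1 - t) * Sw"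
    proof
      fix x assume x: "x \<in> X"
      have "- Amap A w \<bullet> x \<le> Sw" using supp_real_bound[OF Sw x] .
      moreover have "Amap A (\<lambda>\<alpha>. \<nu> \<alpha> - pf i \<alpha>) = (1 - t) *\<^sub>R Amap A w"
        unfolding key by (rule Amap_scale)
      ultimately show "- (Amap A (\<lambda>\<alpha>. \<nu> \<alpha> - pf i \<alpha>) \<bullet> x) \<le> (1 - t) * Sw"
        using tlt mult_left_mono[of "- (Amap A w \<bullet> x)" Sw "1 - t"] by simp
    qed
    show "t * Su + (1 - t) * Sw + ?D \<le> c \<beta>" using SD Seq by simp
    show "\<forall>r. pf i \<noteq> (\<lambda>\<alpha>. r * \<nu> \<alpha>)" by (rule npi)
  qed
qed

end
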